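(* Let $\mathbf{x}_1,\ldots,\mathbf{x}_n\in\mathbb{R}^p$, let $\|\cdot\|$ be an arbitrary norm on $\mathbb{R}^p$, and let $w_{ij}\ge 0$ ($1\le i<j\le n$) be weights. Consider the graph on vertex set $\{1,\dots,n\}$ with an edge between $i$ and $j$ whenever $w_{ij}>0$, and suppose this graph is connected. Let $\bar{\mathbf{x}}=\frac1n\sum_{i=1}^n\mathbf{x}_i$ and let $\bar{\mathbf{X}}\in\mathbb{R}^{p\times n}$ be the matrix each of whose columns equals $\bar{\mathbf{x}}$. Then there exists $\gamma_0\ge 0$ such that for all $\gamma\ge\gamma_0$, $\bar{\mathbf{X}}$ minimizes $$F_\gamma(\mathbf{U})=\frac12\sum_{i=1}^n\|\mathbf{x}_i-\mathbf{u}_i\|_2^2+\gamma\sum_{i<j}w_{ij}\|\mathbf{u}_i-\mathbf{u}_j\|.$$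
   Context: $\mathbf{U}=(\mathbf{u}_1,\ldots,\mathbf{u}_n)\in\mathbb{R}^{p\times n}$ with $\mathbf{u}_i$ its $i$th column. *)

theory Defs
  imports "HOL-Analysis.Analysis"
begin

definition is_norm :: "(real^'p \<Rightarrow> real) \<Rightarrow> bool" where
  "is_norm N \<longleftrightarrow>
     (\<forall>v. 0 \<le> N v) \<and> (\<forall>v. N v = 0 \<longleftrightarrow> v = 0) \<and>
     (\<forall>c v. N (c *\<^sub>R v) = \<bar>c\<bar> * N v) \<and> (\<forall>v u. N (v + u) \<le> N v + N u)"

definition weight_edge :: "nat \<Rightarrow> (nat \<Rightarrow> nat \<Rightarrow> real) \<Rightarrow> nat \<Rightarrow> nat \<Rightarrow> bool" where
  "weight_edge n w a b \<longleftrightarrow> a \<in> {1..n} \<and> b \<in> {1..n} \<and>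
     ((a < b \<and> w a b > 0) \<or> (b < a \<and> w b a > 0))"

definition weight_graph_connected :: "nat \<Rightarrow> (nat \<Rightarrow> nat \<Rightarrow> real) \<Rightarrow> bool" where
  "weight_graph_connected n w \<longleftrightarrow>
     (\<forall>i\<in>{1..n}. \<forall>j\<in>{1..n}. (weight_edge n w)\<^sup>*\<^sup>* i j)"

definition clust_obj :: "(real^'p \<Rightarrow> real) \<Rightarrow> nat \<Rightarrow> (nat \<Rightarrow> nat \<Rightarrow> real)
     \<Rightarrow> (nat \<Rightarrow> real^'p) \<Rightarrow> real \<Rightarrow> (nat \<Rightarrow> real^'p) \<Rightarrow> real" where
  "clust_obj N n w x \<gamma> U =
     1/2 * (\<Sum>i=1..n. (norm (x i - U i))\<^sup>2)
     + \<gamma> * (\<Sum>(i,j)\<in>{(i,j). 1 \<le> i \<and> i < j \<and> j \<le> n}. w i j * N (U i - U j))"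

definition mean_vec :: "nat \<Rightarrow> (nat \<Rightarrow> real^'p) \<Rightarrow> real^'p" where
  "mean_vec n x = (1 / real n) *\<^sub>R (\<Sum>i=1..n. x i)"

end

theory Submission
  imports Defs
begin

lemma isn_basic:
  assumes "is_norm N"
  shows "N 0 = 0" "N (-v) = N v" "N (u - v) = N (v - u)" "N (u + v) \<le> N u + N v" "0 \<le> N v"
    "N (c *\<^sub>R v) = \<bar>c\<bar> * N v"
proof -
  show "N 0 = 0" using assms unfolding is_norm_def by auto
  have "N ((-1) *\<^sub>R v) = N v" for v using assms unfolding is_norm_def by (metis abs_minus_cancel abs_one mult_1)
  then have neg: "N (-v) = N v" for v by simp
  then show "N (-v) = N v" .
  show "N (u - v) = N (v - u)" using neg[of "v - u"] by simp
  show "N (u + v) \<le> N u + N v" "0 \<le> N v" "N (c *\<^sub>R v) = \<bar>c\<bar> * N v"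
    using assms unfolding is_norm_def by auto
qed

lemma isn_sum:
  assumes "is_norm N" "finite A"
  shows "N (\<Sum>i\<in>A. f i) \<le> (\<Sum>i\<in>A. N (f i))"
  using assms(2)
proof (induction A rule: finite_induct)
  case empty then show ?case using isn_basic[OF assms(1)] by simp
next
  case (insert a A)
  then show ?case using isn_basic(4)[OF assms(1), of "f a" "sum f A"] by simp
qed

lemma isn_upper:
  assumes "is_norm N"
  shows "N v \<le> (\<Sum>i\<in>UNIV. N (axis i 1)) * norm (v::real^'p)"
proof -
  have "N v = N (\<Sum>i\<in>UNIV. (v$i) *\<^sub>R axis i 1)"
    using basis_expansion[of v] by (simp add: scalar_mult_eq_scaleR)
  also have "\<dots> \<le> (\<Sum>i\<in>UNIV. N ((v$i) *\<^sub>R axis i 1))" by (rule isn_sum[OF assms]) simp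
  also have "\<dots> = (\<Sum>i\<in>UNIV. \<bar>v$i\<bar> * N (axis i 1))" using isn_basic(6)[OF assms] by simp
  also have "\<dots> \<le> (\<Sum>i\<in>UNIV. norm v * N (axis i 1))"
    by (rule sum_mono, rule mult_right_mono, rule component_le_norm_cart, rule isn_basic(5)[OF assms])
  finally show ?thesis by (simp add: sum_distrib_left mult.commute)
qed

lemma isn_lower:
  assumes "is_norm N"
  shows "\<exists>C>0. \<forall>v::real^'p. norm v \<le> C * N v"
proof -
  define K where "K = (\<Sum>i\<in>UNIV. N (axis i 1))"
  have cont: "continuous_on (sphere 0 1) N"
  proof (rule continuous_on_iff[THEN iffD2], intro ballI allI impI)
    fix x e assume e: "(e::real) > 0"
    show "\<exists>d>0. \<forall>x'\<in>sphere 0 1. dist x' x < d \<longrightarrow> dist (N x') (N x) < e"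
    proof (intro exI[of _ "e / (K + 1)"] conjI ballI impI)
      have K0: "K \<ge> 0" unfolding K_def by (rule sum_nonneg) (rule isn_basic(5)[OF assms])
      show "e / (K + 1) > 0" using e K0 by simp
      fix y assume "dist y x < e / (K + 1)"
      then have d: "norm (y - x) * (K + 1) < e" using K0 by (simp add: dist_norm field_simps)
      have "N y \<le> N (y - x) + N x" using isn_basic(4)[OF assms, of "y - x" x] by simp
      moreover have "N x \<le> N (x - y) + N y" using isn_basic(4)[OF assms, of "x - y" y] by simp
      moreover have "N (x - y) = N (y - x)" by (rule isn_basic(3)[OF assms])
      moreover have "N (y - x) \<le> K * norm (y - x)" unfolding K_def by (rule isn_upper[OF assms])
      moreover have "K * norm (y - x) \<le> norm (y - x) * (K + 1)" by (simp add: algebra_simps)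
      ultimately show "dist (N y) (N x) < e" using d by (simp add: dist_real_def abs_if)
    qed
  qed
  obtain j :: 'p where True by simp
  have "axis j (1::real) \<in> sphere 0 1" by simp
  then have ne: "sphere (0::real^'p) 1 \<noteq> {}" by blast
  obtain v0 where v0: "v0 \<in> sphere 0 1" "\<And>y. y \<in> sphere 0 1 \<Longrightarrow> N v0 \<le> N y"
    using continuous_attains_inf[OF compact_sphere ne cont] by blast
  have "v0 \<noteq> 0" using v0(1) by auto
  then have m: "N v0 > 0" using assms isn_basic(5)[OF assms, of v0] unfolding is_norm_def by (metis less_eq_real_def)
  show ?thesis
  proof (intro exI[of _ "1 / N v0"] conjI allI)
    show "1 / N v0 > 0" using m by simp
    fix v :: "real^'p"
    show "norm v \<le> 1 / N v0 * N v"
    proof (cases "v = 0")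
      case True then show ?thesis using isn_basic(1)[OF assms] by simp
    next
      case False
      then have "(1 / norm v) *\<^sub>R v \<in> sphere 0 1" by auto
      then have "N v0 \<le> N ((1 / norm v) *\<^sub>R v)" by (rule v0(2))
      also have "\<dots> = N v / norm v" using isn_basic(6)[OF assms] by simp
      finally show ?thesis using m False by (simp add: field_simps)
    qed
  qed
qed

lemma path_bound:
  assumes N: "is_norm N"
    and wnn: "\<And>i j. 1 \<le> i \<Longrightarrow> i < j \<Longrightarrow> j \<le> n \<Longrightarrow> w i j \<ge> 0"
    and r: "(weight_edge n w)\<^sup>*\<^sup>* a b"
  shows "\<exists>K\<ge>0. \<forall>U::nat \<Rightarrow> real^'p. N (U b - U a) \<le>
     K * (\<Sum>(i,j)\<in>{(i,j). 1 \<le> i \<and> i < j \<and> j \<le> n}. w i j * N (U i - U j))"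
  using r
proof (induction rule: rtranclp_induct)
  case base
  then show ?case using isn_basic(1)[OF N] by (intro exI[of _ 0]) simp
next
  case (step b c)
  define P where "P = {(i,j). 1 \<le> i \<and> i < j \<and> j \<le> n}"
  have finP: "finite P" unfolding P_def
    by (rule finite_subset[of _ "{1..n} \<times> {1..n}"]) auto
  have nn: "\<And>p. p \<in> P \<Longrightarrow> 0 \<le> (case p of (i,j) \<Rightarrow> w i j * N (U i - U j))" for U :: "nat \<Rightarrow> real^'p"
    unfolding P_def using wnn isn_basic(5)[OF N] by auto
  have single: "\<exists>k\<ge>0. \<forall>U::nat \<Rightarrow> real^'p. N (U c - U b) \<le> k * (\<Sum>(i,j)\<in>P. w i j * N (U i - U j))"
  proof -
    have e: "b \<in> {1..n}" "c \<in> {1..n}" "(b < c \<and> w b c > 0) \<or> (c < b \<and> w c b > 0)"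
      using step(2) unfolding weight_edge_def by auto
    show ?thesis
    proof (cases "b < c \<and> w b c > 0")
      case True
      then have bc: "(b,c) \<in> P" using e unfolding P_def by auto
      show ?thesis
      proof (intro exI[of _ "1 / w b c"] conjI allI)
        show "0 \<le> 1 / w b c" using True by simp
        fix U :: "nat \<Rightarrow> real^'p"
        have "w b c * N (U b - U c) \<le> (\<Sum>(i,j)\<in>P. w i j * N (U i - U j))"
          using member_le_sum[where f="\<lambda>(i,j). w i j * N (U i - U j)", OF bc _ finP] nn[of _ U] by simp
        then show "N (U c - U b) \<le> 1 / w b c * (\<Sum>(i,j)\<in>P. w i j * N (U i - U j))"
          using True isn_basic(3)[OF N, of "U c" "U b"] by (simp add: field_simps)
      qed
    next
      case False
      then have T: "c < b \<and> w c b > 0" using e by auto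
      then have bc: "(c,b) \<in> P" using e unfolding P_def by auto
      show ?thesis
      proof (intro exI[of _ "1 / w c b"] conjI allI)
        show "0 \<le> 1 / w c b" using T by simp
        fix U :: "nat \<Rightarrow> real^'p"
        have "w c b * N (U c - U b) \<le> (\<Sum>(i,j)\<in>P. w i j * N (U i - U j))"
          using member_le_sum[where f="\<lambda>(i,j). w i j * N (U i - U j)", OF bc _ finP] nn[of _ U] by simp
        then show "N (U c - U b) \<le> 1 / w c b * (\<Sum>(i,j)\<in>P. w i j * N (U i - U j))"
          using T by (simp add: field_simps)
      qed
    qed
  qed
  obtain k where k: "k \<ge> 0" "\<And>U::nat \<Rightarrow> real^'p. N (U c - U b) \<le> k * (\<Sum>(i,j)\<in>P. w i j * N (U i - U j))"
    using single by blast
  obtain K where K: "K \<ge> 0" "\<And>U::nat \<Rightarrow> real^'p. N (U b - U a) \<le> K * (\<Sum>(i,j)\<in>P. w i j * N (U i - U j))"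
    using step(3) unfolding P_def by blast
  show ?case unfolding P_def[symmetric]
  proof (intro exI[of _ "k + K"] conjI allI)
    show "0 \<le> k + K" using k K by simp
    fix U :: "nat \<Rightarrow> real^'p"
    have "N (U c - U a) \<le> N (U c - U b) + N (U b - U a)"
      using isn_basic(4)[OF N, of "U c - U b" "U b - U a"] by simp
    then show "N (U c - U a) \<le> (k + K) * (\<Sum>(i,j)\<in>P. w i j * N (U i - U j))"
      using k(2)[of U] K(2)[of U] by (simp add: distrib_right)
  qed
qed

theorem proposition2:
  fixes x :: "nat \<Rightarrow> real^'p" and N :: "real^'p \<Rightarrow> real"
    and w :: "nat \<Rightarrow> nat \<Rightarrow> real" and n :: nat
  assumes "is_norm N"
    and "\<And>i j. 1 \<le> i \<Longrightarrow> i < j \<Longrightarrow> j \<le> n \<Longrightarrow> w i j \<ge> 0"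
    and "weight_graph_connected n w"
  shows "\<exists>\<gamma>0 \<ge> 0. \<forall>\<gamma> \<ge> \<gamma>0. \<forall>U :: nat \<Rightarrow> real^'p.
           clust_obj N n w x \<gamma> (\<lambda>i. mean_vec n x) \<le> clust_obj N n w x \<gamma> U"
proof (cases "n = 0")
  case True
  have E: "{(i,j). 1 \<le> i \<and> i < j \<and> j \<le> n} = ({} :: (nat\<times>nat) set)" using True by auto
  show ?thesis unfolding clust_obj_def E using True by auto
next
  case False
  note N = assms(1)
  define P where "P = {(i,j). 1 \<le> i \<and> i < j \<and> j \<le> n}"
  define T where "T = (\<lambda>U::nat \<Rightarrow> real^'p. (\<Sum>(i,j)\<in>P. w i j * N (U i - U j)))"
  define m where "m = mean_vec n x"
  define a where "a = (\<lambda>i. x i - m)"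
  have "\<forall>i\<in>{1..n}. \<exists>K\<ge>0. \<forall>U::nat \<Rightarrow> real^'p. N (U i - U 1) \<le> K * T U"
  proof
    fix i assume "i \<in> {1..n}"
    moreover have "1 \<in> {1..n}" using False by auto
    ultimately have "(weight_edge n w)\<^sup>*\<^sup>* 1 i" using assms(3) unfolding weight_graph_connected_def by blast
    from path_bound[OF N assms(2) this] show "\<exists>K\<ge>0. \<forall>U::nat \<Rightarrow> real^'p. N (U i - U 1) \<le> K * T U"
      unfolding T_def P_def by blast
  qed
  then obtain K where K: "\<And>i. i \<in> {1..n} \<Longrightarrow> K i \<ge> 0"
     "\<And>i U. i \<in> {1..n} \<Longrightarrow> N (U i - U 1) \<le> K i * T U"
    by metis
  obtain C where C: "C > 0" "\<And>v::real^'p. norm v \<le> C * N v" using isn_lower[OF N] by blast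
  define G where "G = C * (\<Sum>i=1..n. norm (a i) * K i)"
  have G0: "G \<ge> 0" unfolding G_def using C K by (auto intro!: sum_nonneg mult_nonneg_nonneg)
  have finP: "finite P" unfolding P_def
    by (rule finite_subset[of _ "{1..n} \<times> {1..n}"]) auto
  have T0: "T U \<ge> 0" for U unfolding T_def P_def
    using assms(2) isn_basic(5)[OF N] by (auto intro!: sum_nonneg mult_nonneg_nonneg)
  have suma: "(\<Sum>i=1..n. a i) = 0"
  proof -
    have "(\<Sum>i=1..n. a i) = (\<Sum>i=1..n. x i) - real n *\<^sub>R m" unfolding a_def by (simp add: sum_subtractf scaleR_conv_of_real)
    also have "real n *\<^sub>R m = (\<Sum>i=1..n. x i)" unfolding m_def mean_vec_def using False by simp
    finally show ?thesis by simp
  qed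
  have base: "clust_obj N n w x \<gamma> (\<lambda>i. m) = 1/2 * (\<Sum>i=1..n. (norm (a i))\<^sup>2)" for \<gamma>
    unfolding clust_obj_def a_def using isn_basic(1)[OF N] by simp
  show ?thesis unfolding m_def[symmetric]
  proof (intro exI[of _ G] conjI allI impI)
    show "0 \<le> G" by (rule G0)
    fix \<gamma> :: real and U :: "nat \<Rightarrow> real^'p" assume g: "G \<le> \<gamma>"
    have sq: "(norm (x i - U i))\<^sup>2 \<ge> (norm (a i))\<^sup>2 + 2 * (a i \<bullet> (m - U i))" for i
    proof -
      have gen: "(norm (b + c))\<^sup>2 = (norm b)\<^sup>2 + 2 * (b \<bullet> c) + (norm c)\<^sup>2" for b c :: "real^'p"
        unfolding power2_norm_eq_inner by (simp add: inner_add_left inner_add_right inner_commute[of c b])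
      have eq: "x i - U i = a i + (m - U i)" unfolding a_def by simp
      have "(norm (x i - U i))\<^sup>2 = (norm (a i))\<^sup>2 + 2 * (a i \<bullet> (m - U i)) + (norm (m - U i))\<^sup>2"
        unfolding eq by (rule gen)
      then show ?thesis by simp
    qed
    have split: "(\<Sum>i=1..n. a i \<bullet> (m - U i)) = - (\<Sum>i=1..n. a i \<bullet> (U i - U 1))"
    proof -
      have "(\<Sum>i=1..n. a i \<bullet> (m - U i)) = (\<Sum>i=1..n. a i \<bullet> (m - U 1) - a i \<bullet> (U i - U 1))"
        by (rule sum.cong) (auto simp: inner_diff_right)
      also have "\<dots> = (\<Sum>i=1..n. a i) \<bullet> (m - U 1) - (\<Sum>i=1..n. a i \<bullet> (U i - U 1))"
        by (simp add: sum_subtractf inner_sum_left)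
      finally show ?thesis using suma by simp
    qed
    have bnd: "(\<Sum>i=1..n. a i \<bullet> (U i - U 1)) \<le> G * T U"
    proof -
      have "(\<Sum>i=1..n. a i \<bullet> (U i - U 1)) \<le> (\<Sum>i=1..n. C * (norm (a i) * K i) * T U)"
      proof (rule sum_mono)
        fix i assume i: "i \<in> {1..n}"
        have "a i \<bullet> (U i - U 1) \<le> norm (a i) * norm (U i - U 1)" by (rule norm_cauchy_schwarz)
        also have "\<dots> \<le> norm (a i) * (C * N (U i - U 1))" by (rule mult_left_mono[OF C(2)]) simp
        also have "\<dots> \<le> norm (a i) * (C * (K i * T U))"
          using K(2)[OF i, of U] C(1) by (intro mult_left_mono) auto
        finally show "a i \<bullet> (U i - U 1) \<le> C * (norm (a i) * K i) * T U" by (simp add: algebra_simps)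
      qed
      also have "\<dots> = G * T U" unfolding G_def by (simp add: sum_distrib_left sum_distrib_right)
      finally show ?thesis .
    qed
    have "(\<Sum>i=1..n. (norm (x i - U i))\<^sup>2) \<ge> (\<Sum>i=1..n. (norm (a i))\<^sup>2 + 2 * (a i \<bullet> (m - U i)))"
      by (rule sum_mono) (rule sq)
    also have "(\<Sum>i=1..n. (norm (a i))\<^sup>2 + 2 * (a i \<bullet> (m - U i))) =
        (\<Sum>i=1..n. (norm (a i))\<^sup>2) - 2 * (\<Sum>i=1..n. a i \<bullet> (U i - U 1))"
      using split by (simp add: sum.distrib sum_distrib_left[symmetric])
    finally have A: "(\<Sum>i=1..n. (norm (x i - U i))\<^sup>2) \<ge> (\<Sum>i=1..n. (norm (a i))\<^sup>2) - 2 * (G * T U)"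
      using bnd by linarith
    have B: "\<gamma> * T U \<ge> G * T U" using g T0[of U] by (rule mult_right_mono)
    have "clust_obj N n w x \<gamma> U = 1/2 * (\<Sum>i=1..n. (norm (x i - U i))\<^sup>2) + \<gamma> * T U"
      unfolding clust_obj_def T_def P_def by simp
    then show "clust_obj N n w x \<gamma> (\<lambda>i. m) \<le> clust_obj N n w x \<gamma> U"
      using base[of \<gamma>] A B by linarith
  qed
qed

end
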